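(* Let $(X_n)_{n\in\mathbb{N}}$ be i.i.d. real random variables with distribution function $F$ and survival function $\bar F(x)=\mathbb{P}(X_1>x)$, with $\bar F(x)=x^{-\alpha}L(x)$ for all $x>x_0$, where $x_0>0$, $\alpha>0$ and $L$ is slowly varying. Let $X_{(n)}=\max_{1\le i\le n}X_i$, $a_n=F^{\leftarrow}(1-1/n)$ and, for $n\ge2$, $Z_n=(X_{(n)}/a_n)^{\alpha/\log n}$ (on $\{X_{(n)}>0\}$). Then for every $x\ge 1$, \[ \limsup_{n\to\infty}\frac{1}{\log n}\log\mathbb{P}(Z_n>x)\le -\log x. \]
   Context: A function $L:(0,\infty)\to(0,\infty)$ is slowly varying if $\lim_{x\to\infty}L(tx)/L(x)=1$ for all $t>0$. $F^{\leftarrow}(u)=\inf\{x\in\mathbb{R}: F(x)\ge u\}$. Note $\{Z_n>x\}=\{X_{(n)}>a_n x^{\log n/\alpha}\}$ for $x\ge1$ once $a_n>0$. *)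

theory Defs
  imports "HOL-Probability.Probability"
begin

definition slowly_varying :: "(real \<Rightarrow> real) \<Rightarrow> bool" where
  "slowly_varying L \<longleftrightarrow> (\<forall>x>0. L x > 0) \<and>
     (\<forall>t>0. ((\<lambda>x. L (t * x) / L x) \<longlongrightarrow> 1) at_top)"

definition gen_inverse :: "(real \<Rightarrow> real) \<Rightarrow> real \<Rightarrow> real" where
  "gen_inverse F u = Inf {x. F x \<ge> u}"

definition lnE :: "real \<Rightarrow> ereal" where
  "lnE p = (if p \<le> 0 then -\<infinity> else ereal (ln p))"

end

theory Submission
  imports Defs
begin

lemma potter:
  fixes G :: "real \<Rightarrow> real" and \<beta> Y y l :: real
  assumes mono: "\<And>s t. s \<le> t \<Longrightarrow> G t \<le> G s" and nonneg: "\<And>t. G t \<ge> 0"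
    and b: "\<beta> > 0" and Y: "Y > 0"
    and step: "\<And>y. y \<ge> Y \<Longrightarrow> G (2*y) \<le> 2 powr (-\<beta>) * G y"
    and y: "y \<ge> Y" and l: "1 \<le> l"
  shows "G (l*y) \<le> 2 powr \<beta> * l powr (-\<beta>) * G y"
proof -
  have ypos: "y > 0" using y Y by linarith
  have main: "\<forall>l. 1 \<le> l \<and> l \<le> 2^k \<longrightarrow> G (l*y) \<le> 2 powr \<beta> * l powr (-\<beta>) * G y" for k :: nat
  proof (induction k)
    case 0
    show ?case
    proof (intro allI impI)
      fix l :: real assume "1 \<le> l \<and> l \<le> 2^0"
      then have "l = 1" by simp
      moreover have "1 \<le> 2 powr \<beta>" using b by (intro ge_one_powr_ge_zero) auto
      ultimately show "G (l*y) \<le> 2 powr \<beta> * l powr (-\<beta>) * G y"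
        using nonneg[of y] by (simp add: mult_le_cancel_right1)
    qed
  next
    case (Suc k)
    show ?case
    proof (intro allI impI)
      fix l :: real assume l: "1 \<le> l \<and> l \<le> 2^Suc k"
      show "G (l*y) \<le> 2 powr \<beta> * l powr (-\<beta>) * G y"
      proof (cases "l \<le> 2")
        case True
        have "G (l*y) \<le> G y" using mono[of y "l*y"] l ypos by simp
        moreover have "1 \<le> 2 powr \<beta> * l powr (-\<beta>)"
        proof -
          have "(2/l) powr \<beta> = 2 powr \<beta> / l powr \<beta>" using l by (simp add: powr_divide)
          moreover have "l powr (-\<beta>) = 1 / l powr \<beta>" by (rule powr_minus_divide)
          ultimately have "2 powr \<beta> * l powr (-\<beta>) = (2 / l) powr \<beta>" by simp
          moreover have "1 \<le> (2/l) powr \<beta>" using l True b by (intro ge_one_powr_ge_zero) auto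
          ultimately show ?thesis by simp
        qed
        moreover have "1 * G y \<le> 2 powr \<beta> * l powr (-\<beta>) * G y"
          by (rule mult_right_mono[OF \<open>1 \<le> 2 powr \<beta> * l powr (-\<beta>)\<close> nonneg])
        ultimately show ?thesis by linarith
      next
        case False
        have l2: "1 \<le> l/2 \<and> l/2 \<le> 2^k" using l False by simp
        have "G (l*y) = G (2*((l/2)*y))" by simp
        also have "\<dots> \<le> 2 powr (-\<beta>) * G ((l/2)*y)"
        proof (rule step)
          have "y \<le> (l/2)*y" using l2 ypos by simp
          then show "Y \<le> (l/2)*y" using y by linarith
        qed
        also have "\<dots> \<le> 2 powr (-\<beta>) * (2 powr \<beta> * (l/2) powr (-\<beta>) * G y)"
          by (rule mult_left_mono[OF Suc.IH[rule_format, OF l2]]) simp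
        also have "\<dots> = 2 powr \<beta> * l powr (-\<beta>) * G y"
        proof -
          have "(l/2) powr (-\<beta>) = l powr (-\<beta>) / 2 powr (-\<beta>)" using l by (simp add: powr_divide)
          moreover have b: "2 powr (-\<beta>) * 2 powr \<beta> = (1::real)" by (simp add: powr_add[symmetric])
          ultimately show ?thesis by (simp add: field_simps)
        qed
        finally show ?thesis .
      qed
    qed
  qed
  obtain k :: nat where "l < 2^k" using real_arch_pow[of 2 l] by auto
  then show ?thesis using main[of k] l by auto
qed

theorem mainTheorem3:
  fixes M :: "'a measure" and X :: "nat \<Rightarrow> 'a \<Rightarrow> real"
    and F :: "real \<Rightarrow> real" and L :: "real \<Rightarrow> real"
    and \<alpha> x0 x :: real
  assumes "prob_space M"
    and "prob_space.indep_vars M (\<lambda>_. borel) X UNIV"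
    and "\<And>i. distr M borel (X i) = distr M borel (X 1)"
    and "\<And>t. F t = measure M {\<omega> \<in> space M. X 1 \<omega> \<le> t}"
    and "x0 > 0" and "\<alpha> > 0" and "slowly_varying L"
    and "\<And>t. t > x0 \<Longrightarrow> measure M {\<omega> \<in> space M. X 1 \<omega> > t} = t powr (-\<alpha>) * L t"
    and "x \<ge> 1"
  shows "limsup (\<lambda>n::nat.
            lnE (measure M {\<omega> \<in> space M.
                   Max ((\<lambda>i. X i \<omega>) ` {1..n}) > 0 \<and>
                   (Max ((\<lambda>i. X i \<omega>) ` {1..n}) / gen_inverse F (1 - 1 / real n))
                      powr (\<alpha> / ln (real n)) > x})
            / ereal (ln (real n)))
         \<le> ereal (- ln x)"
proof -
  interpret P: prob_space M by fact
  have rv: "\<And>i. X i \<in> measurable M borel"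
    using assms(2) unfolding P.indep_vars_def by auto
  define G where "G t = measure M {\<omega> \<in> space M. X 1 \<omega> > t}" for t :: real
  have ev: "{\<omega> \<in> space M. X i \<omega> > t} \<in> P.events" for i :: nat and t :: real
    using rv by measurable
  have Gi: "measure M {\<omega> \<in> space M. X i \<omega> > t} = G t" for i t
  proof -
    have e: "\<And>j. X j -` {t<..} \<inter> space M = {\<omega> \<in> space M. X j \<omega> > t}" by auto
    have "measure M {\<omega> \<in> space M. X i \<omega> > t} = measure (distr M borel (X i)) {t<..}"
      using rv[of i] by (simp add: measure_distr e)
    also have "\<dots> = measure (distr M borel (X 1)) {t<..}" using assms(3)[of i] by simp
    also have "\<dots> = G t"
      using rv[of 1] by (simp add: measure_distr e G_def)
    finally show ?thesis .
  qed
  have FG: "F t = 1 - G t" for t :: real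
  proof -
    have "{\<omega> \<in> space M. X 1 \<omega> \<le> t} = space M - {\<omega> \<in> space M. X 1 \<omega> > t}" by auto
    then show ?thesis using P.prob_compl[OF ev[of t 1]] assms(4)[of t] by (simp add: G_def)
  qed
  have Gmono: "G t \<le> G s" if "s \<le> t" for s t :: real
    unfolding G_def using that by (intro P.finite_measure_mono ev) auto
  have Gnn: "G t \<ge> 0" for t :: real unfolding G_def by simp
  have Lpos: "\<And>y. y > 0 \<Longrightarrow> L y > 0" using assms(7) unfolding slowly_varying_def by auto
  have Gpos: "G t > 0" for t :: real
  proof -
    define s where "s = max t (x0+1)"
    have "s > x0" "s > 0" using assms(5) unfolding s_def by auto
    then have "G s > 0" using assms(8)[of s] Lpos[of s] by (simp add: G_def)
    moreover have "G s \<le> G t" using Gmono[of t s] by (simp add: s_def)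
    ultimately show ?thesis by linarith
  qed
  have Fmono: "F s \<le> F t" if "s \<le> t" for s t :: real using Gmono[OF that] FG by simp
  define D where "D = distr M borel (X 1)"
  interpret RD: real_distribution D unfolding D_def using rv[of 1] by simp
  have FD: "F = cdf D"
  proof
    fix t
    have e: "X 1 -` {..t} \<inter> space M = {\<omega> \<in> space M. X 1 \<omega> \<le> t}" by auto
    have "cdf D t = measure M (X 1 -` {..t} \<inter> space M)" unfolding cdf_def D_def
      by (rule measure_distr[OF rv]) simp
    then show "F t = cdf D t" unfolding e assms(4) by simp
  qed
  have Ftop: "(F \<longlongrightarrow> 1) at_top" unfolding FD by (rule RD.cdf_lim_at_top_prob)
  have Fbot: "(F \<longlongrightarrow> 0) at_bot" unfolding FD by (rule RD.cdf_lim_at_bot)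
  have Fright: "continuous (at_right a) F" for a unfolding FD by (rule RD.cdf_is_right_cont)
  define Pn where "Pn n = measure M {\<omega> \<in> space M.
                   Max ((\<lambda>i. X i \<omega>) ` {1..n}) > 0 \<and>
                   (Max ((\<lambda>i. X i \<omega>) ` {1..n}) / gen_inverse F (1 - 1 / real n))
                      powr (\<alpha> / ln (real n)) > x}" for n :: nat
  have bound: "\<exists>C>0. eventually (\<lambda>n. Pn n \<le> C * real n powr (-(ln x * (\<alpha>-\<epsilon>)/\<alpha>))) sequentially"
    if e0: "0 < \<epsilon>" and e1: "\<epsilon> < \<alpha>" for \<epsilon>
  proof -
    define \<beta> where "\<beta> = \<alpha> - \<epsilon>"
    have b0: "\<beta> > 0" using e1 unfolding \<beta>_def by simp
    have "((\<lambda>y. L (2 * y) / L y) \<longlongrightarrow> 1) at_top"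
      using assms(7) unfolding slowly_varying_def by auto
    moreover have "1 < (2::real) powr \<epsilon>" using e0 by (simp add: gr_one_powr)
    ultimately have "eventually (\<lambda>y. L (2 * y) / L y < 2 powr \<epsilon>) at_top"
      by (rule order_tendstoD(2))
    then obtain Y0 where Y0: "\<And>y. y \<ge> Y0 \<Longrightarrow> L (2 * y) / L y < 2 powr \<epsilon>"
      unfolding eventually_at_top_linorder by blast
    define Y where "Y = max Y0 (x0 + 1)"
    have Ypos: "Y > 0" using assms(5) unfolding Y_def by auto
    have step: "G (2*y) \<le> 2 powr (-\<beta>) * G y" if y: "y \<ge> Y" for y
    proof -
      have yx: "y > x0" "y > 0" "2*y > x0" using y assms(5) unfolding Y_def by auto
      have Ly: "L y > 0" using Lpos yx by simp
      have "L (2*y) < 2 powr \<epsilon> * L y" using Y0[of y] y Ly unfolding Y_def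
        by (simp add: pos_divide_less_eq)
      have "G (2*y) = (2*y) powr (-\<alpha>) * L (2*y)" using assms(8)[of "2*y"] yx by (simp add: G_def)
      also have "\<dots> = 2 powr (-\<alpha>) * y powr (-\<alpha>) * L (2*y)" using yx by (simp add: powr_mult)
      also have "\<dots> \<le> 2 powr (-\<alpha>) * y powr (-\<alpha>) * (2 powr \<epsilon> * L y)"
        using \<open>L (2*y) < 2 powr \<epsilon> * L y\<close> by (intro mult_left_mono) auto
      also have "\<dots> = (2 powr (-\<alpha>) * 2 powr \<epsilon>) * (y powr (-\<alpha>) * L y)" by simp
      also have "\<dots> = 2 powr (-\<beta>) * G y"
        using assms(8)[of y] yx by (simp add: G_def \<beta>_def powr_add[symmetric])
      finally show ?thesis .
    qed
    have pot: "G (l*y) \<le> 2 powr \<beta> * l powr (-\<beta>) * G y" if "y \<ge> Y" "1 \<le> l" for y l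
      by (rule potter[of G \<beta> Y]) (use Gmono Gnn b0 Ypos step that in auto)
    have GY: "G Y > 0" by (rule Gpos)
    have ev1: "eventually (\<lambda>n::nat. 2 \<le> n \<and> 1 / real n < G Y) sequentially"
    proof -
      have "eventually (\<lambda>n::nat. n \<ge> nat \<lceil>1 / G Y\<rceil> + 2) sequentially"
        by (rule eventually_ge_at_top)
      then show ?thesis
      proof (rule eventually_mono)
        fix n :: nat assume n: "n \<ge> nat \<lceil>1 / G Y\<rceil> + 2"
        then have "real n > 1 / G Y" by linarith
        then have "1 < real n * G Y" using GY by (simp add: divide_less_eq mult.commute)
        then show "2 \<le> n \<and> 1 / real n < G Y" using n
          by (simp add: divide_less_eq mult.commute)
      qed
    qed
    show ?thesis
    proof (intro exI conjI)
      show "(0::real) < 2 powr \<beta>" by simp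
      show "eventually (\<lambda>n. Pn n \<le> 2 powr \<beta> * real n powr (-(ln x * (\<alpha>-\<epsilon>)/\<alpha>))) sequentially"
        using ev1
      proof (rule eventually_mono)
        fix n :: nat assume n: "2 \<le> n \<and> 1 / real n < G Y"
        show "Pn n \<le> 2 powr \<beta> * real n powr (-(ln x * (\<alpha>-\<epsilon>)/\<alpha>))"
        proof -
          have n2: "2 \<le> n" and nG: "1 / real n < G Y" using n by auto
          define u where "u = 1 - 1 / real n"
          have u0: "0 < u" and u1: "u < 1" using n2 unfolding u_def by (auto simp: field_simps)
          define S where "S = {y. u \<le> F y}"
          define a where "a = Inf S"
          have a_def': "gen_inverse F (1 - 1 / real n) = a"
            unfolding a_def S_def u_def gen_inverse_def by simp
          have Sne: "S \<noteq> {}"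
          proof -
            have "eventually (\<lambda>y. F y > u) at_top" using Ftop u1 by (rule order_tendstoD(1))
            then obtain N where "\<And>y. y \<ge> N \<Longrightarrow> F y > u" unfolding eventually_at_top_linorder by blast
            then have "N \<in> S" unfolding S_def by force
            then show ?thesis by blast
          qed
          have Sbdd: "bdd_below S"
          proof -
            have "eventually (\<lambda>y. F y < u) at_bot" using Fbot u0 by (rule order_tendstoD(2))
            then obtain N where N: "\<And>y. y \<le> N \<Longrightarrow> F y < u" unfolding eventually_at_bot_linorder by blast
            have "N \<le> y" if "y \<in> S" for y
            proof (rule ccontr)
              assume "\<not> N \<le> y"
              then have "F y < u" using N by simp
              then show False using that unfolding S_def by simp
            qed
            then show ?thesis unfolding bdd_below_def by blast
          qed
          have aY: "Y \<le> a" unfolding a_def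
          proof (rule cInf_greatest[OF Sne])
            fix y assume y: "y \<in> S"
            show "Y \<le> y"
            proof (rule ccontr)
              assume "\<not> Y \<le> y"
              then have "F y \<le> F Y" using Fmono by simp
              also have "\<dots> < u" using nG FG[of Y] unfolding u_def by simp
              finally show False using y unfolding S_def by simp
            qed
          qed
          have apos: "a > 0" using aY Ypos by linarith
          have Fa: "u \<le> F a"
          proof -
            have "(F \<longlongrightarrow> F a) (at_right a)" using Fright[of a] by (simp add: continuous_within)
            moreover have "eventually (\<lambda>y. u \<le> F y) (at_right a)"
              using eventually_at_right_less[of a]
            proof (rule eventually_mono)
              fix y assume "a < y"
              then obtain s where "s \<in> S" "s < y" using cInf_less_iff[OF Sne Sbdd] unfolding a_def by blast
              then show "u \<le> F y" using Fmono[of s y] unfolding S_def by simp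
            qed
            ultimately show ?thesis by (rule tendsto_lowerbound) simp
          qed
          have Ga: "G a \<le> 1 / real n" using Fa FG[of a] unfolding u_def by simp
          have Gapos: "G a > 0" by (rule Gpos)
          define l where "l = real n powr (ln x / \<alpha>)"
          have l1: "1 \<le> l" unfolding l_def using n2 assms(6,9)
            by (intro ge_one_powr_ge_zero) auto
          define t where "t = l * a"
          have lpow: "l powr (\<alpha> / ln (real n)) = x"
          proof -
            have lnn: "ln (real n) > 0" using n2 by simp
            have "l powr (\<alpha> / ln (real n)) = real n powr (ln x / \<alpha> * (\<alpha> / ln (real n)))"
              unfolding l_def by (simp add: powr_powr)
            also have "ln x / \<alpha> * (\<alpha> / ln (real n)) = ln x / ln (real n)" using assms(6) by simp
            also have "real n powr (ln x / ln (real n)) = exp (ln x / ln (real n) * ln (real n))"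
              using n2 by (simp add: powr_def)
            also have "\<dots> = x" using lnn assms(9) by simp
            finally show ?thesis .
          qed
          have sub: "{\<omega> \<in> space M.
                   Max ((\<lambda>i. X i \<omega>) ` {1..n}) > 0 \<and>
                   (Max ((\<lambda>i. X i \<omega>) ` {1..n}) / gen_inverse F (1 - 1 / real n))
                      powr (\<alpha> / ln (real n)) > x}
                 \<subseteq> (\<Union>i\<in>{1..n}. {\<omega> \<in> space M. X i \<omega> > t})"
          proof
            fix \<omega> assume w: "\<omega> \<in> {\<omega> \<in> space M.
                   Max ((\<lambda>i. X i \<omega>) ` {1..n}) > 0 \<and>
                   (Max ((\<lambda>i. X i \<omega>) ` {1..n}) / gen_inverse F (1 - 1 / real n))
                      powr (\<alpha> / ln (real n)) > x}"
            define m where "m = Max ((\<lambda>i. X i \<omega>) ` {1..n})"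
            have m0: "m > 0" and mx: "(m / a) powr (\<alpha> / ln (real n)) > x"
              using w unfolding m_def a_def' by auto
            have "t < m"
            proof (rule ccontr)
              assume "\<not> t < m"
              then have "m / a \<le> l" using apos unfolding t_def by (simp add: divide_le_eq)
              then have "(m / a) powr (\<alpha> / ln (real n)) \<le> l powr (\<alpha> / ln (real n))"
                using m0 apos n2 assms(6) by (intro powr_mono2) auto
              then show False using mx lpow by simp
            qed
            then have "\<exists>i\<in>{1..n}. t < X i \<omega>" unfolding m_def using n2
              by (subst (asm) Max_gr_iff) auto
            then show "\<omega> \<in> (\<Union>i\<in>{1..n}. {\<omega> \<in> space M. X i \<omega> > t})" using w by auto
          qed
          have "Pn n \<le> measure M (\<Union>i\<in>{1..n}. {\<omega> \<in> space M. X i \<omega> > t})"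
            unfolding Pn_def using sub ev by (intro P.finite_measure_mono) auto
          also have "\<dots> \<le> (\<Sum>i\<in>{1..n}. measure M {\<omega> \<in> space M. X i \<omega> > t})"
            using ev by (intro P.finite_measure_subadditive_finite) auto
          also have "\<dots> = real n * G t" using Gi by simp
          also have "\<dots> \<le> G t / G a"
          proof -
            have "real n \<le> 1 / G a" using Ga Gapos n2 by (simp add: field_simps)
            then have "real n * G t \<le> (1 / G a) * G t" by (rule mult_right_mono) (rule Gnn)
            then show ?thesis by simp
          qed
          also have "\<dots> \<le> 2 powr \<beta> * l powr (-\<beta>)"
            using pot[OF aY l1] Gapos unfolding t_def by (simp add: divide_le_eq)
          also have "l powr (-\<beta>) = real n powr (-(ln x * (\<alpha>-\<epsilon>)/\<alpha>))"
          proof -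
            have "ln x * (\<epsilon> - \<alpha>) / \<alpha> = - (ln x * (\<alpha> - \<epsilon>) / \<alpha>)" by (simp add: minus_divide_left algebra_simps)
            then show ?thesis unfolding l_def \<beta>_def by (simp add: powr_powr)
          qed
          finally show ?thesis .
        qed
      qed
    qed
  qed

  have goal: "limsup (\<lambda>n::nat. lnE (Pn n) / ereal (ln (real n))) \<le> ereal (- ln x)"
  proof (rule ereal_le_epsilon2)
    fix \<delta> :: real assume d0: "0 < \<delta>"
    have lx: "ln x \<ge> 0" using assms(9) by simp
    define \<epsilon> where "\<epsilon> = min (\<alpha>/2) (\<delta> * \<alpha> / (2 * (ln x + 1)))"
    have e0: "0 < \<epsilon>" using assms(6) d0 lx unfolding \<epsilon>_def by auto
    have e1: "\<epsilon> < \<alpha>" using assms(6) unfolding \<epsilon>_def by auto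
    have "\<epsilon> * (2 * (ln x + 1)) \<le> \<delta> * \<alpha>"
    proof -
      have "\<epsilon> \<le> \<delta> * \<alpha> / (2 * (ln x + 1))" unfolding \<epsilon>_def by simp
      then have "\<epsilon> * (2 * (ln x + 1)) \<le> \<delta> * \<alpha> / (2 * (ln x + 1)) * (2 * (ln x + 1))"
        using lx by (intro mult_right_mono) auto
      also have "\<dots> = \<delta> * \<alpha>" using lx by simp
      finally show ?thesis .
    qed
    then have "2 * (ln x * \<epsilon>) \<le> \<delta> * \<alpha>" using e0 lx by (simp add: algebra_simps)
    then have lxe: "ln x * \<epsilon> / \<alpha> \<le> \<delta> / 2" using assms(6) by (simp add: field_simps)
    define c where "c = ln x * (\<alpha> - \<epsilon>) / \<alpha>"
    have c: "c \<ge> ln x - \<delta> / 2"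
    proof -
      have "c = ln x - ln x * \<epsilon> / \<alpha>" unfolding c_def using assms(6) by (simp add: field_simps)
      then show ?thesis using lxe by simp
    qed
    obtain C where C0: "C > 0" and evC: "eventually (\<lambda>n. Pn n \<le> C * real n powr (- c)) sequentially"
      using bound[OF e0 e1] unfolding c_def by blast
    have ev2: "eventually (\<lambda>n::nat. n \<ge> nat \<lceil>exp (2 * \<bar>ln C\<bar> / \<delta>)\<rceil> + 2) sequentially"
      by (rule eventually_ge_at_top)
    have "limsup (\<lambda>n::nat. lnE (Pn n) / ereal (ln (real n))) \<le> ereal (- ln x + \<delta>)"
    proof (rule Limsup_bounded)
      show "eventually (\<lambda>n::nat. lnE (Pn n) / ereal (ln (real n)) \<le> ereal (- ln x + \<delta>)) sequentially"
        using evC ev2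
      proof (rule eventually_elim2)
        fix n :: nat
        assume P: "Pn n \<le> C * real n powr (- c)" and n: "n \<ge> nat \<lceil>exp (2 * \<bar>ln C\<bar> / \<delta>)\<rceil> + 2"
        have n2: "real n \<ge> 2" using n by linarith
        have lnn: "ln (real n) > 0" using n2 by simp
        have "real n \<ge> exp (2 * \<bar>ln C\<bar> / \<delta>)" using n by linarith
        then have "ln (real n) \<ge> 2 * \<bar>ln C\<bar> / \<delta>"
          using n2 ln_le_cancel_iff[of "exp (2 * \<bar>ln C\<bar> / \<delta>)" "real n"] by simp
        then have "2 * \<bar>ln C\<bar> \<le> ln (real n) * \<delta>" using d0 by (simp add: pos_divide_le_eq)
        moreover have "\<delta> / 2 * ln (real n) = (ln (real n) * \<delta>) / 2" by simp
        ultimately have lnC: "ln C \<le> \<delta> / 2 * ln (real n)" by linarith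
        show "lnE (Pn n) / ereal (ln (real n)) \<le> ereal (- ln x + \<delta>)"
        proof (cases "Pn n \<le> 0")
          case True
          then show ?thesis using lnn by (simp add: lnE_def)
        next
          case False
          then have Ppos: "Pn n > 0" by simp
          have "ln (Pn n) \<le> ln (C * real n powr (- c))" using Ppos P by simp
          also have "\<dots> = ln C - c * ln (real n)" using C0 n2 by (simp add: ln_mult ln_powr)
          finally have "ln (Pn n) \<le> ln C - c * ln (real n)" .
          then have "ln (Pn n) / ln (real n) \<le> (ln C - c * ln (real n)) / ln (real n)"
            using lnn by (simp add: divide_right_mono)
          also have "\<dots> = ln C / ln (real n) - c" using lnn by (simp add: field_simps)
          also have "\<dots> \<le> \<delta> / 2 - c" using lnC lnn by (simp add: pos_divide_le_eq)
          also have "\<dots> \<le> - ln x + \<delta>" using c by simp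
          finally have "ln (Pn n) / ln (real n) \<le> - ln x + \<delta>" .
          then show ?thesis using Ppos lnn by (simp add: lnE_def)
        qed
      qed
    qed
    then show "limsup (\<lambda>n::nat. lnE (Pn n) / ereal (ln (real n))) \<le> ereal (- ln x) + ereal \<delta>"
      by simp
  qed
  then show ?thesis unfolding Pn_def .
qed

end
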